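(* Let $\mathsf{KEM}_{\mathrm{eph}}$ be a $\delta_{\mathrm{eph}}$-correct key encapsulation mechanism and $\mathsf{KEM}_{\mathrm{stat}}$ a $\delta_{\mathrm{stat}}$-correct key encapsulation mechanism, and let $\Pi=(\mathsf{Init},\mathsf{SendM1},\mathsf{SendM2})$ be the authenticated key exchange protocol with QKD oracle described in the context, built from these KEMs, a key-derivation function $\mathsf{KDF}$ and two MACs $\mathsf{MAC}^{(qkd)},\mathsf{MAC}^{(pqc)}$. Then $\Pi$ is a $(\delta_{\mathrm{eph}}+2\delta_{\mathrm{stat}})$-correct AKE: for any two completed sessions $\mathit{sid}$ and $\mathit{sid}'$ of $\Pi$ that match each other and whose QKD key identifier has not been corrupted, $$\Pr[\text{session key of } \mathit{sid} \neq \text{session key of } \mathit{sid}'] \le \delta_{\mathrm{eph}}+2\delta_{\mathrm{stat}}.$$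
   Context: A KEM is a triple $(\mathsf{KeyGen},\mathsf{Encaps},\mathsf{Decaps})$; it is $\delta$-correct if for $(pk,sk)\leftarrow\mathsf{KeyGen}()$ and $(c,k)\leftarrow\mathsf{Encaps}(pk)$ one has $\Pr[\mathsf{Decaps}(sk,c)\neq k]\le\delta$. Parties $i$ hold static key pairs $(pk_i,sk_i)$ of $\mathsf{KEM}_{\mathrm{stat}}$. QKD oracle: for each session $\mathit{sid}$ the protocol may call $\mathsf{QKD\text{-}GET\text{-}KEY}(\mathit{sid},\ell_{qkd})$, which returns a key identifier $\mathit{kid}$ and a key $k_{qkd}$ of length $\ell_{qkd}$, and $\mathsf{QKD\text{-}GET\text{-}KEY\text{-}WITH\text{-}ID}(\mathit{sid},\mathit{kid})$, which returns the key stored under $\mathit{kid}$ for the corresponding peer, or $\bot$. A key identifier is "corrupted" if the adversary has overridden the key stored under it; for an uncorrupted identifier both calls give the same key. Protocol $\Pi$ (destructuring assignments mean: parse, and abort the session on wrong format; $(x\|y):=k$ splits $k$ so that $x$ has the length of a MAC key and $y$ is the rest): $\mathsf{Combine}(i_I,i_R,t,k_{qkd},k_{pqc})$: $(k_{qkd,m}\|k_{qkd,s}):=k_{qkd}$; $(k_{pqc,m}\|k_{pqc,s}):=k_{pqc}$; $k_{sess}:=k_{qkd,s}\oplus k_{pqc,s}$; $\tau_1:=\mathsf{MAC}^{(qkd)}_{k_{qkd,m}}((t,i_I,i_R))$; $\tau_2:=\mathsf{MAC}^{(pqc)}_{k_{pqc,m}}((t,\tau_1,i_I,i_R))$; return $(k_{sess},\tau_1,\tau_2)$.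 $\mathsf{Init}(pk_j)$ (initiator, peer $j$): $(c_b,k_b)\leftarrow\mathsf{Encaps}_{\mathrm{stat}}(pk_j)$; $(pk_e,sk_e)\leftarrow\mathsf{KeyGen}_{\mathrm{eph}}()$; $m_1:=(c_b,pk_e)$; state $s:=(k_b,sk_e,m_1)$; output $(m_1,s)$. $\mathsf{SendM1}(i,sk_i,j,pk_j,m_1)$ (responder $i$, peer $j$, session $\mathit{sid}$): $(c_b,pk_e):=m_1$; $k_b':=\mathsf{Decaps}_{\mathrm{stat}}(sk_i,c_b)$; $(c_a,k_a)\leftarrow\mathsf{Encaps}_{\mathrm{stat}}(pk_j)$; $(c_e,k_e)\leftarrow\mathsf{Encaps}_{\mathrm{eph}}(pk_e)$; $k_{pqc}:=\mathsf{KDF}(k_b',k_a,k_e)$; $(\mathit{kid},k_{qkd})\leftarrow\mathsf{QKD\text{-}GET\text{-}KEY}(\mathit{sid},\ell_{qkd})$; $t:=(m_1,(c_a,c_e,\mathit{kid}))$; $(k_{sess},\tau_1,\tau_2):=\mathsf{Combine}(j,i,t,k_{qkd},k_{pqc})$; $m_2:=(c_a,c_e,\mathit{kid},\tau_1,\tau_2)$; output $(m_2,k_{sess})$. $\mathsf{SendM2}(i,sk_i,j,s,m_2)$ (initiator $i$, peer $j$, session $\mathit{sid}$): $(c_a,c_e,\mathit{kid},\tau_1',\tau_2'):=m_2$; $(k_b,sk_e,m_1):=s$; $k_a':=\mathsf{Decaps}_{\mathrm{stat}}(sk_i,c_a)$; $k_e':=\mathsf{Decaps}_{\mathrm{eph}}(sk_e,c_e)$;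 $k_{pqc}:=\mathsf{KDF}(k_b,k_a',k_e')$; $k_{qkd}:=\mathsf{QKD\text{-}GET\text{-}KEY\text{-}WITH\text{-}ID}(\mathit{sid},\mathit{kid})$, abort if $\bot$; $t:=(m_1,(c_a,c_e,\mathit{kid}))$; $(k_{sess},\tau_1,\tau_2):=\mathsf{Combine}(i,j,t,k_{qkd},k_{pqc})$; abort if $\tau_1\ne\tau_1'$ or $\tau_2\neq\tau_2'$; output $k_{sess}$. Two sessions match if they have opposite roles (one initiator, one responder), each one's owner is the other's peer, and they have the same transcript $(m_1,m_2)$. *)

theory Defs
  imports "HOL-Probability.Probability"
begin

record ('pk, 'sk, 'c, 'k) kem =
  kem_keygen :: "('pk \<times> 'sk) pmf"
  kem_encaps :: "'pk \<Rightarrow> ('c \<times> 'k) pmf"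
  kem_decaps :: "'sk \<Rightarrow> 'c \<Rightarrow> 'k"

definition kem_correct :: "real \<Rightarrow> ('pk, 'sk, 'c, 'k) kem \<Rightarrow> bool" where
  "kem_correct \<delta> K \<longleftrightarrow>
     measure_pmf.prob
       (bind_pmf (kem_keygen K) (\<lambda>(pk, sk).
        bind_pmf (kem_encaps K pk) (\<lambda>(c, k).
        return_pmf (kem_decaps K sk c \<noteq> k))))
       {True} \<le> \<delta>"

text \<open>Destructuring (x || y) := k with x of length n: fails (None) on wrong format.\<close>
definition split_key :: "nat \<Rightarrow> bool list \<Rightarrow> (bool list \<times> bool list) option" where
  "split_key n k = (if length k < n then None else Some (take n k, drop n k))"

definition xor_bits :: "bool list \<Rightarrow> bool list \<Rightarrow> bool list" where
  "xor_bits x y = map2 (\<noteq>) x y"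

text \<open>Combine. nq / np are the key lengths of MAC^(qkd) and MAC^(pqc).\<close>
definition combine ::
  "nat \<Rightarrow> nat \<Rightarrow> (bool list \<Rightarrow> ('t \<times> 'id \<times> 'id) \<Rightarrow> 'tg1)
   \<Rightarrow> (bool list \<Rightarrow> ('t \<times> 'tg1 \<times> 'id \<times> 'id) \<Rightarrow> 'tg2)
   \<Rightarrow> 'id \<Rightarrow> 'id \<Rightarrow> 't \<Rightarrow> bool list \<Rightarrow> bool list \<Rightarrow> (bool list \<times> 'tg1 \<times> 'tg2) option" where
  "combine nq np macq macp iI iR t kqkd kpqc =
     (case (split_key nq kqkd, split_key np kpqc) of
        (Some (kqm, kqs), Some (kpm, kps)) \<Rightarrow>
          (let \<tau>1 = macq kqm (t, iI, iR);
               \<tau>2 = macp kpm (t, \<tau>1, iI, iR)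
           in Some (xor_bits kqs kps, \<tau>1, \<tau>2))
      | _ \<Rightarrow> None)"

definition proto_init ::
  "('pks, 'sks, 'cs, 'ks) kem \<Rightarrow> ('pke, 'ske, 'ce, 'ke) kem \<Rightarrow> 'pks
   \<Rightarrow> (('cs \<times> 'pke) \<times> ('ks \<times> 'ske \<times> ('cs \<times> 'pke))) pmf" where
  "proto_init Ks Ke pkj =
     bind_pmf (kem_encaps Ks pkj) (\<lambda>(cb, kb).
     bind_pmf (kem_keygen Ke) (\<lambda>(pke, ske).
     return_pmf ((cb, pke), (kb, ske, (cb, pke)))))"

text \<open>The QKD call QKD-GET-KEY is modelled by the distribution qkd of (kid, k_qkd).
  Output None = abort; otherwise Some (m2, k_sess).\<close>
definition proto_sendM1 ::
  "('pks, 'sks, 'cs, 'ks) kem \<Rightarrow> ('pke, 'ske, 'ce, 'ke) kem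
   \<Rightarrow> ('ks \<Rightarrow> 'ks \<Rightarrow> 'ke \<Rightarrow> bool list)
   \<Rightarrow> nat \<Rightarrow> nat
   \<Rightarrow> (bool list \<Rightarrow> ((('cs \<times> 'pke) \<times> ('cs \<times> 'ce \<times> 'kid)) \<times> 'id \<times> 'id) \<Rightarrow> 'tg1)
   \<Rightarrow> (bool list \<Rightarrow> ((('cs \<times> 'pke) \<times> ('cs \<times> 'ce \<times> 'kid)) \<times> 'tg1 \<times> 'id \<times> 'id) \<Rightarrow> 'tg2)
   \<Rightarrow> ('kid \<times> bool list) pmf
   \<Rightarrow> 'id \<Rightarrow> 'sks \<Rightarrow> 'id \<Rightarrow> 'pks \<Rightarrow> ('cs \<times> 'pke)
   \<Rightarrow> ((('cs \<times> 'ce \<times> 'kid \<times> 'tg1 \<times> 'tg2) \<times> bool list) option) pmf" where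
  "proto_sendM1 Ks Ke KDF nq np macq macp qkd i ski j pkj m1 =
     (case m1 of (cb, pke) \<Rightarrow>
      let kb' = kem_decaps Ks ski cb in
      bind_pmf (kem_encaps Ks pkj) (\<lambda>(ca, ka).
      bind_pmf (kem_encaps Ke pke) (\<lambda>(ce, ke).
      let kpqc = KDF kb' ka ke in
      bind_pmf qkd (\<lambda>(kid, kqkd).
      let t = (m1, (ca, ce, kid)) in
      return_pmf
        (case combine nq np macq macp j i t kqkd kpqc of
           None \<Rightarrow> None
         | Some (ksess, \<tau>1, \<tau>2) \<Rightarrow> Some ((ca, ce, kid, \<tau>1, \<tau>2), ksess))))))"

text \<open>SendM2 (initiator i with secret key sk_i, peer j, state s). The call
  QKD-GET-KEY-WITH-ID is modelled by the lookup function qkd_get (None = bottom).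
  Output None = abort; otherwise Some k_sess.\<close>
definition proto_sendM2 ::
  "('pks, 'sks, 'cs, 'ks) kem \<Rightarrow> ('pke, 'ske, 'ce, 'ke) kem
   \<Rightarrow> ('ks \<Rightarrow> 'ks \<Rightarrow> 'ke \<Rightarrow> bool list)
   \<Rightarrow> nat \<Rightarrow> nat
   \<Rightarrow> (bool list \<Rightarrow> ((('cs \<times> 'pke) \<times> ('cs \<times> 'ce \<times> 'kid)) \<times> 'id \<times> 'id) \<Rightarrow> 'tg1)
   \<Rightarrow> (bool list \<Rightarrow> ((('cs \<times> 'pke) \<times> ('cs \<times> 'ce \<times> 'kid)) \<times> 'tg1 \<times> 'id \<times> 'id) \<Rightarrow> 'tg2)
   \<Rightarrow> ('kid \<Rightarrow> bool list option)
   \<Rightarrow> 'id \<Rightarrow> 'sks \<Rightarrow> 'id \<Rightarrow> ('ks \<times> 'ske \<times> ('cs \<times> 'pke))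
   \<Rightarrow> ('cs \<times> 'ce \<times> 'kid \<times> 'tg1 \<times> 'tg2) \<Rightarrow> bool list option" where
  "proto_sendM2 Ks Ke KDF nq np macq macp qkd_get i ski j s m2 =
     (case m2 of (ca, ce, kid, \<tau>1', \<tau>2') \<Rightarrow>
      case s of (kb, ske, m1) \<Rightarrow>
      let ka' = kem_decaps Ks ski ca;
          ke' = kem_decaps Ke ske ce;
          kpqc = KDF kb ka' ke'
      in case qkd_get kid of
           None \<Rightarrow> None
         | Some kqkd \<Rightarrow>
             (let t = (m1, (ca, ce, kid)) in
              case combine nq np macq macp i j t kqkd kpqc of
                None \<Rightarrow> None
              | Some (ksess, \<tau>1, \<tau>2) \<Rightarrow>
                  if \<tau>1 \<noteq> \<tau>1' \<or> \<tau>2 \<noteq> \<tau>2' then None else Some ksess))"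

text \<open>The initiator runs Init(pk_j); the responder receives exactly m1 and runs SendM1;
  the initiator receives exactly m2 and runs SendM2 (so the two sessions have the
  same transcript (m1,m2), i.e. match).\<close>
definition ake_mismatch_exp ::
  "('pks, 'sks, 'cs, 'ks) kem \<Rightarrow> ('pke, 'ske, 'ce, 'ke) kem
   \<Rightarrow> ('ks \<Rightarrow> 'ks \<Rightarrow> 'ke \<Rightarrow> bool list)
   \<Rightarrow> nat \<Rightarrow> nat
   \<Rightarrow> (bool list \<Rightarrow> ((('cs \<times> 'pke) \<times> ('cs \<times> 'ce \<times> 'kid)) \<times> 'id \<times> 'id) \<Rightarrow> 'tg1)
   \<Rightarrow> (bool list \<Rightarrow> ((('cs \<times> 'pke) \<times> ('cs \<times> 'ce \<times> 'kid)) \<times> 'tg1 \<times> 'id \<times> 'id) \<Rightarrow> 'tg2)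
   \<Rightarrow> ('kid \<times> bool list) pmf \<Rightarrow> ('kid \<Rightarrow> bool list option)
   \<Rightarrow> 'id \<Rightarrow> 'id \<Rightarrow> bool pmf" where
  "ake_mismatch_exp Ks Ke KDF nq np macq macp qkd qkd_get i j =
     bind_pmf (kem_keygen Ks) (\<lambda>(pki, ski).
     bind_pmf (kem_keygen Ks) (\<lambda>(pkj, skj).
     bind_pmf (proto_init Ks Ke pkj) (\<lambda>(m1, s).
     bind_pmf (proto_sendM1 Ks Ke KDF nq np macq macp qkd j skj i pki m1) (\<lambda>r.
     return_pmf
       (case r of
          None \<Rightarrow> False
        | Some (m2, ksess) \<Rightarrow>
            proto_sendM2 Ks Ke KDF nq np macq macp qkd_get i ski j s m2 \<noteq> Some ksess)))))"

end

theory Submission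
  imports Defs
begin

lemma case_opt_aux:
  "(case (case x of None \<Rightarrow> None | Some y \<Rightarrow> F y) of None \<Rightarrow> False | Some z \<Rightarrow> G z)
   = (case x of None \<Rightarrow> False | Some y \<Rightarrow> (case F y of None \<Rightarrow> False | Some z \<Rightarrow> G z))"
  by (cases x) auto

theorem mainTheorem1:
  fixes Ks :: "('pks, 'sks, 'cs, 'ks) kem"
    and Ke :: "('pke, 'ske, 'ce, 'ke) kem"
    and KDF :: "'ks \<Rightarrow> 'ks \<Rightarrow> 'ke \<Rightarrow> bool list"
    and nq np :: nat
    and macq :: "bool list \<Rightarrow> ((('cs \<times> 'pke) \<times> ('cs \<times> 'ce \<times> 'kid)) \<times> 'id \<times> 'id) \<Rightarrow> 'tg1"
    and macp :: "bool list \<Rightarrow> ((('cs \<times> 'pke) \<times> ('cs \<times> 'ce \<times> 'kid)) \<times> 'tg1 \<times> 'id \<times> 'id) \<Rightarrow> 'tg2"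
    and qkd :: "('kid \<times> bool list) pmf"
    and qkd_get :: "'kid \<Rightarrow> bool list option"
    and i j :: 'id
    and \<delta>eph \<delta>stat :: real
  assumes "kem_correct \<delta>eph Ke"
    and "kem_correct \<delta>stat Ks"
    and "\<forall>(kid, k) \<in> set_pmf qkd. qkd_get kid = Some k"
  shows "measure_pmf.prob (ake_mismatch_exp Ks Ke KDF nq np macq macp qkd qkd_get i j) {True}
           \<le> \<delta>eph + 2 * \<delta>stat"
proof -
  define mm where "mm = (\<lambda>ski skj cb kb pke ske ca ka ce ke kid kq.
     case combine nq np macq macp i j ((cb,pke),(ca,ce,kid)) kq (KDF (kem_decaps Ks skj cb) ka ke) of
       None \<Rightarrow> False
     | Some (ks, t1, t2) \<Rightarrow>
        proto_sendM2 Ks Ke KDF nq np macq macp qkd_get i ski j (kb,ske,(cb,pke)) (ca,ce,kid,t1,t2) \<noteq> Some ks)"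
  define X where "X = bind_pmf (kem_keygen Ks) (\<lambda>(pki,ski). bind_pmf (kem_keygen Ks) (\<lambda>(pkj,skj).
     bind_pmf (kem_encaps Ks pkj) (\<lambda>(cb,kb). bind_pmf (kem_keygen Ke) (\<lambda>(pke,ske).
     bind_pmf (kem_encaps Ks pki) (\<lambda>(ca,ka). bind_pmf (kem_encaps Ke pke) (\<lambda>(ce,ke).
     bind_pmf qkd (\<lambda>(kid,kq). return_pmf ((kem_decaps Ks skj cb \<noteq> kb, kem_decaps Ks ski ca \<noteq> ka,
        kem_decaps Ke ske ce \<noteq> ke), mm ski skj cb kb pke ske ca ka ce ke kid kq))))))))"
  have eq: "ake_mismatch_exp Ks Ke KDF nq np macq macp qkd qkd_get i j = map_pmf snd X"
    unfolding ake_mismatch_exp_def X_def proto_init_def proto_sendM1_def mm_def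
    by (simp add: map_bind_pmf bind_assoc_pmf bind_return_pmf split_def Let_def case_opt_aux case_prod_beta cong: option.case_cong)
  have key: "\<not> mm ski skj cb (kem_decaps Ks skj cb) pke ske ca (kem_decaps Ks ski ca) ce
      (kem_decaps Ke ske ce) kid kq" if "qkd_get kid = Some kq"
    for ski skj cb pke ske ca ce kid kq
    using that unfolding mm_def proto_sendM2_def by (auto simp: Let_def split: option.splits)
  define E1 where "E1 = {x :: (bool \<times> bool \<times> bool) \<times> bool. fst (fst x)}"
  define E2 where "E2 = {x :: (bool \<times> bool \<times> bool) \<times> bool. fst (snd (fst x))}"
  define E3 where "E3 = {x :: (bool \<times> bool \<times> bool) \<times> bool. snd (snd (fst x))}"
  have ae: "\<forall>x\<in>set_pmf X. snd x \<longrightarrow> x \<in> E1 \<union> E2 \<union> E3"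
    using assms(3) key unfolding X_def E1_def E2_def E3_def
    by (fastforce simp: split_def)
  have "measure_pmf.prob (ake_mismatch_exp Ks Ke KDF nq np macq macp qkd qkd_get i j) {True}
      = measure_pmf.prob X {x. snd x}" unfolding eq by (simp add: vimage_def)
  also have "\<dots> \<le> measure_pmf.prob X (E1 \<union> E2 \<union> E3)"
    by (rule measure_pmf.finite_measure_mono_AE) (use ae in \<open>auto simp: AE_measure_pmf_iff\<close>)
  also have "\<dots> \<le> measure_pmf.prob X E1 + measure_pmf.prob X E2 + measure_pmf.prob X E3"
    by (smt (verit) measure_Un_le sets_measure_pmf UNIV_I)
  also have "measure_pmf.prob X E1 \<le> \<delta>stat"
  proof -
    have "measure_pmf.prob X E1 = measure_pmf.prob (map_pmf (\<lambda>x. fst (fst x)) X) {True}"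
      by (simp add: E1_def vimage_def)
    also have "map_pmf (\<lambda>x. fst (fst x)) X = bind_pmf (kem_keygen Ks) (\<lambda>(pk, sk).
        bind_pmf (kem_encaps Ks pk) (\<lambda>(c, k). return_pmf (kem_decaps Ks sk c \<noteq> k)))"
      unfolding X_def by (simp add: map_bind_pmf split_def)
    finally show ?thesis using assms(2) unfolding kem_correct_def by simp
  qed
  also have "measure_pmf.prob X E2 \<le> \<delta>stat"
  proof -
    have "measure_pmf.prob X E2 = measure_pmf.prob (map_pmf (\<lambda>x. fst (snd (fst x))) X) {True}"
      by (simp add: E2_def vimage_def)
    also have "map_pmf (\<lambda>x. fst (snd (fst x))) X = bind_pmf (kem_keygen Ks) (\<lambda>(pk, sk).
        bind_pmf (kem_encaps Ks pk) (\<lambda>(c, k). return_pmf (kem_decaps Ks sk c \<noteq> k)))"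
      unfolding X_def by (simp add: map_bind_pmf split_def)
    finally show ?thesis using assms(2) unfolding kem_correct_def by simp
  qed
  also have "measure_pmf.prob X E3 \<le> \<delta>eph"
  proof -
    have "measure_pmf.prob X E3 = measure_pmf.prob (map_pmf (\<lambda>x. snd (snd (fst x))) X) {True}"
      by (simp add: E3_def vimage_def)
    also have "map_pmf (\<lambda>x. snd (snd (fst x))) X = bind_pmf (kem_keygen Ke) (\<lambda>(pk, sk).
        bind_pmf (kem_encaps Ke pk) (\<lambda>(c, k). return_pmf (kem_decaps Ke sk c \<noteq> k)))"
      unfolding X_def by (simp add: map_bind_pmf split_def)
    finally show ?thesis using assms(1) unfolding kem_correct_def by simp
  qed
  finally show ?thesis by simp
qed

end
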